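(* Let $\mathcal{C}'$ be an $[N,k]$ MDS code over a finite field $\mathbb{F}_q$ and let $G'=[a'_{i,j}]$ ($1\le i\le k$, $1\le j\le N$) be a generator matrix of $\mathcal{C}'$. Let $n$ be the order of the (cyclic) multiplicative subgroup of $\mathbb{F}_q^\times$ generated by all non-zero entries of $G'$, and let $\zeta_n'\in\mathbb{F}_q$ be a generator of this subgroup (a primitive $n$-th root of unity), so that every non-zero entry can be written as $a'_{i,j}=(\zeta_n')^{e_{i,j}}$ with $e_{i,j}$ an integer, unique modulo $n$. Let $\zeta_n=e^{2\pi i/n}\in\mathbb{C}$ and $K=\mathbb{Q}(\zeta_n)$. Define the $k\times N$ matrix $G=[a_{i,j}]$ over $K$ by $a_{i,j}=0$ if $a'_{i,j}=0$ and $a_{i,j}=\zeta_n^{e_{i,j}}$ if $a'_{i,j}=(\zeta_n')^{e_{i,j}}$. Then the code $\mathcal{C}\subseteq K^N$ generated by $G$ is an $[N,k]$ MDS code over $K$.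
   Context: A linear $[N,k]$ code over a field $F$ is a $k$-dimensional subspace of $F^N$; it is MDS if its minimum Hamming distance equals $N-k+1$, equivalently every $k\times k$ submatrix (choice of $k$ columns) of a $k\times N$ generator matrix is non-singular. *)

theory Defs
  imports Complex_Main "Jordan_Normal_Form.Determinant"
begin

definition col_submat :: "'a mat \<Rightarrow> nat \<Rightarrow> (nat \<Rightarrow> nat) \<Rightarrow> 'a mat" where
  "col_submat G k c = mat k k (\<lambda>(i, j). G $$ (i, c j))"

text \<open>The code generated by the rows of the k x N matrix G is an [N,k] MDS code:
  G is k x N, k \<le> N, and every choice of k (distinct) columns gives a
  non-singular k x k submatrix (this also forces rank G = k).\<close>
definition generates_MDS :: "nat \<Rightarrow> nat \<Rightarrow> 'a::field mat \<Rightarrow> bool" where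
  "generates_MDS N k G \<longleftrightarrow> G \<in> carrier_mat k N \<and> k \<le> N \<and>
     (\<forall>c. strict_mono_on {0..<k} c \<longrightarrow> (\<forall>j<k. c j < N) \<longrightarrow> det (col_submat G k c) \<noteq> 0)"

definition mult_subgroup :: "'a::field set \<Rightarrow> bool" where
  "mult_subgroup T \<longleftrightarrow> 1 \<in> T \<and> 0 \<notin> T \<and> (\<forall>x\<in>T. \<forall>y\<in>T. x * y \<in> T) \<and> (\<forall>x\<in>T. inverse x \<in> T)"

definition gen_mult_subgroup :: "'a::field set \<Rightarrow> 'a set" where
  "gen_mult_subgroup S = \<Inter>{T. mult_subgroup T \<and> S \<subseteq> T}"

end

theory Submission
  imports Defs "Berlekamp_Zassenhaus.Poly_Mod" "Berlekamp_Zassenhaus.Factor_Bound"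
begin


lemma monic_int_dvd_transfer:
  fixes A B :: "int poly"
  assumes mon: "monic A"
    and dv: "map_poly (of_int :: int \<Rightarrow> 'b::{field,ring_char_0}) A dvd map_poly of_int B"
  shows "A dvd B"
proof -
  have A0: "A \<noteq> 0" using mon by auto
  obtain q r where pd: "pseudo_divmod B A = (q, r)" by force
  from pseudo_divmod[OF A0 pd] mon have eq: "B = A * q + r" and dr: "r = 0 \<or> degree r < degree A"
    by auto
  let ?h = "map_poly (of_int :: int \<Rightarrow> 'b)"
  have "?h r = ?h B - ?h A * ?h q" using eq by (simp add: hom_distribs)
  hence "?h A dvd ?h r" using dv by (metis dvd_diff dvd_triv_left)
  moreover have "degree (?h r) = degree r" by simp
  moreover have "degree (?h A) = degree A" by simp
  ultimately have "r = 0"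
  proof -
    assume a: "?h A dvd ?h r" "degree (?h r) = degree r" "degree (?h A) = degree A"
    show "r = 0"
    proof (rule ccontr)
      assume "r \<noteq> 0"
      hence "?h r \<noteq> 0" by simp
      from dvd_imp_degree_le[OF a(1) this] a dr \<open>r \<noteq> 0\<close> show False by simp
    qed
  qed
  with eq show ?thesis by simp
qed



lemma binom_frob:
  fixes u v :: "'a::comm_ring_1"
  assumes p: "prime p"
  shows "\<exists>w. (u+v)^p = u^p + v^p + of_nat p * w"
proof -
  have p0: "p > 0" using p prime_gt_0_nat by blast
  have "(u+v)^p = (\<Sum>k\<le>p. of_nat (p choose k) * u^k * v^(p-k))" by (rule binomial_ring)
  also have "{..p} = insert 0 (insert p {1..<p})" using p0 by auto
  also have "(\<Sum>k\<in>insert 0 (insert p {1..<p}). of_nat (p choose k) * u^k * v^(p-k))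
     = v^p + (u^p + (\<Sum>k\<in>{1..<p}. of_nat (p choose k) * u^k * v^(p-k)))"
    using p0 by (subst sum.insert; simp)+
  also have "(\<Sum>k\<in>{1..<p}. of_nat (p choose k) * u^k * v^(p-k))
      = (\<Sum>k\<in>{1..<p}. of_nat p * (of_nat ((p choose k) div p) * u^k * v^(p-k)))"
  proof (rule sum.cong[OF refl])
    fix k assume k: "k \<in> {1..<p}"
    have "p dvd (p choose k)" using k p0 p by (intro dvd_choose_prime) auto
    hence "(p choose k) = p * ((p choose k) div p)" by simp
    hence "(of_nat (p choose k) :: 'a) = of_nat p * of_nat ((p choose k) div p)"
      by (metis of_nat_mult)
    thus "of_nat (p choose k) * u^k * v^(p-k) = of_nat p * (of_nat ((p choose k) div p) * u^k * v^(p-k))"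
      by (simp add: mult.assoc)
  qed
  also have "\<dots> = of_nat p * (\<Sum>k\<in>{1..<p}. of_nat ((p choose k) div p) * u^k * v^(p-k))"
    by (simp add: sum_distrib_left)
  finally show ?thesis by (intro exI[of _ "(\<Sum>k\<in>{1..<p}. of_nat ((p choose k) div p) * u^k * v^(p-k))"]) (simp add: algebra_simps)
qed

lemma fermat_nat_ex:
  assumes p: "prime p"
  shows "\<exists>t. (int a)^p = int a + int p * t"
proof (induction a)
  case 0
  then show ?case using p prime_gt_0_nat by (intro exI[of _ 0]) simp
next
  case (Suc a)
  then obtain t where t: "(int a)^p = int a + int p * t" by blast
  obtain w where w: "(int a + 1)^p = (int a)^p + 1^p + of_nat p * w" using binom_frob[OF p] by blast
  show ?case using t w by (intro exI[of _ "t + w"]) (simp add: algebra_simps)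
qed

lemma fermat_int_ex:
  assumes p: "prime p"
  shows "\<exists>t. (a::int)^p = a + int p * t"
proof -
  have p0: "p > 0" using p prime_gt_0_nat by blast
  define m where "m = nat (a mod int p)"
  define q where "q = a div int p"
  have am: "a = int m + int p * q" using p0 unfolding m_def q_def by simp
  obtain t where t: "(int m)^p = int m + int p * t" using fermat_nat_ex[OF p] by blast
  obtain w where w: "(int m + int p * q)^p = (int m)^p + (int p * q)^p + of_nat p * w"
    using binom_frob[OF p] by blast
  have "(int p * q)^p = int p * (int p ^ (p - 1) * q^p)"
  proof -
    obtain k where k: "p = Suc k" using p0 by (cases p) auto
    show ?thesis unfolding k by (simp add: power_mult_distrib)
  qed
  hence "a^p = a + int p * (t - q + int p ^ (p - 1) * q^p + w)"
    using am t w by (simp add: algebra_simps)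
  thus ?thesis by blast
qed

lemma frob_poly:
  assumes p: "prime p"
  shows "\<exists>h. (g::int poly)^p = pcompose g (Polynomial.monom 1 p) + smult (int p) h"
proof (induction g)
  case 0
  then show ?case using p prime_gt_0_nat by (intro exI[of _ 0]) (simp add: power_0_left)
next
  case (pCons a g)
  then obtain h where h: "g^p = pcompose g (Polynomial.monom 1 p) + smult (int p) h" by blast
  obtain t where t: "a^p = a + int p * t" using fermat_int_ex[OF p] by blast
  have e1: "pCons a g = [:a:] + [:0,1:] * g" by simp
  obtain w where w: "([:a:] + [:0,1:] * g)^p = [:a:]^p + ([:0,1:] * g)^p + of_nat p * w"
    using binom_frob[OF p] by blast
  have "[:a:]^p = [:a:] + smult (int p) [:t:]" using t by (simp add: poly_const_pow)
  moreover have "([:0,1:] * g)^p = Polynomial.monom 1 p * pcompose g (Polynomial.monom 1 p) + smult (int p) (Polynomial.monom 1 p * h)"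
  proof -
    have x: "([:0,1:] :: int poly)^p = Polynomial.monom 1 p" by (simp add: monom_altdef)
    have "([:0,1:] * g)^p = [:0,1:]^p * g^p" by (rule power_mult_distrib)
    also have "\<dots> = Polynomial.monom 1 p * (pcompose g (Polynomial.monom 1 p) + smult (int p) h)"
      by (simp only: x h)
    also have "\<dots> = Polynomial.monom 1 p * pcompose g (Polynomial.monom 1 p) + smult (int p) (Polynomial.monom 1 p * h)"
      by (simp only: distrib_left mult_smult_right)
    finally show ?thesis .
  qed
  moreover have "(of_nat p :: int poly) * w = smult (int p) w"
    by (simp add: of_nat_poly)
  moreover have "pcompose (pCons a g) (Polynomial.monom 1 p) = [:a:] + Polynomial.monom 1 p * pcompose g (Polynomial.monom 1 p)"
    by (simp add: pcompose_pCons)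
  ultimately have "(pCons a g)^p = pcompose (pCons a g) (Polynomial.monom 1 p) + smult (int p) ([:t:] + Polynomial.monom 1 p * h + w)"
    using w e1 by (simp only: smult_add_right add.assoc add.left_commute)
  thus ?case by blast
qed



lemma int_contra:
  fixes fi gi :: "int poly" and n l :: nat
  assumes mon: "monic fi" and dg: "degree fi > 0"
    and fg: "fi * gi = Polynomial.monom 1 n - 1" and n: "n > 0"
    and l: "prime l" and ln: "\<not> l dvd n"
    and dv: "fi dvd pcompose gi (Polynomial.monom 1 l)"
  shows False
proof -
  define inI where "inI u \<longleftrightarrow> (\<exists>c d. u = fi*c + smult (int l) d)" for u
  obtain h where h: "gi^l = pcompose gi (Polynomial.monom 1 l) + smult (int l) h"
    using frob_poly[OF l] by blast
  obtain kk where kk: "pcompose gi (Polynomial.monom 1 l) = fi * kk" using dv by (auto elim: dvdE)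
  have base: "inI (gi^l)" unfolding inI_def by (intro exI[of _ kk] exI[of _ h]) (simp add: h kk)
  have D: "fi * pderiv gi + gi * pderiv fi = Polynomial.monom (of_nat n) (n-1)"
    using arg_cong[OF fg, of pderiv] by (simp add: pderiv_mult pderiv_diff pderiv_monom)
  have X: "[:0,1:] * Polynomial.monom (c::int) (n-1) = Polynomial.monom c n" for c
    using n by (cases n) (simp_all add: monom_Suc)
  define A where "A = smult (int n) gi - [:0,1:] * pderiv gi"
  define B where "B = [:0,1:] * pderiv fi"
  have ident: "[:- int n:] = fi * A - B * gi"
  proof -
    have "fi * A - B * gi = smult (int n) (fi * gi) - [:0,1:] * (fi * pderiv gi + gi * pderiv fi)"
      unfolding A_def B_def by (simp add: algebra_simps)
    also have "\<dots> = smult (int n) (Polynomial.monom 1 n - 1) - Polynomial.monom (int n) n"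
      unfolding fg D X by simp
    also have "\<dots> = [:- int n:]"
    proof -
      have "smult (int n) (Polynomial.monom 1 n - 1) = Polynomial.monom (int n) n - [:int n:]"
        by (simp add: smult_diff_right smult_monom)
      thus ?thesis by simp
    qed
    finally show ?thesis by simp
  qed
  have cop: "gcd (int n) (int l) = 1"
  proof -
    have "gcd l n = 1" using prime_imp_coprime[OF l ln] by (simp add: coprime_iff_gcd_eq_1)
    hence "gcd n l = 1" by (simp add: gcd.commute)
    thus ?thesis by (metis gcd_int_int_eq of_nat_1)
  qed
  obtain a b where ab: "a * int n + b * int l = 1"
    using bezout_int[of "int n" "int l"] cop by auto
  have step: "inI (gi^k)" if "inI (gi^(Suc k))" for k
  proof -
    from that obtain c d where cd: "gi^(Suc k) = fi*c + smult (int l) d" unfolding inI_def by blast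
    have "[:- int n:] * gi^k = (fi * A - B * gi) * gi^k"
      using ident by simp
    also have "\<dots> = fi * (A * gi^k) - B * gi^(Suc k)"
      by (simp add: algebra_simps)
    also have "\<dots> = fi * (A * gi^k - B * c) + smult (int l) (- (B * d))"
      unfolding cd by (simp add: algebra_simps)
    finally have e1: "smult (- int n) (gi^k) = fi * (A * gi^k - B * c) + smult (int l) (- (B * d))"
      by simp
    have "gi^k = smult (a * int n + b * int l) (gi^k)" using ab by simp
    also have "\<dots> = smult (-a) (smult (- int n) (gi^k)) + smult (int l) (smult b (gi^k))"
      by (simp add: smult_add_left algebra_simps)
    also have "\<dots> = fi * smult (-a) (A * gi^k - B * c) + smult (int l) (smult (-a) (- (B * d)) + smult b (gi^k))"
      unfolding e1 by (simp add: algebra_simps smult_add_right smult_diff_right)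
    finally show ?thesis unfolding inI_def by blast
  qed
  have down: "inI (gi^(l-k))" if "k \<le> l" for k
    using that
  proof (induction k)
    case 0 then show ?case using base by simp
  next
    case (Suc k)
    hence "inI (gi^(l-k))" by simp
    moreover have "l - k = Suc (l - Suc k)" using Suc.prems by simp
    ultimately show ?case using step by metis
  qed
  from down[of l] have "inI 1" by simp
  then obtain c d where cd0: "1 = fi * c + smult (int l) d" unfolding inI_def
    by blast
  have o: "[:1:] = (1::int poly)" by simp
  have cd: "[:1:] = c * fi + smult (int l) d" unfolding o using cd0 by (simp add: mult.commute)
  hence "poly_mod.dvdm (int l) fi [:1:]" by (intro poly_mod.div_mod_imp_dvdm) blast
  from poly_mod.monic_dvdm_constant[OF this mon dg] have "1 mod int l = 0" .
  moreover have "int l \<ge> 2" using l prime_ge_2_nat by auto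
  ultimately show False by simp
qed



lemma rat_int_comp: "map_poly (of_rat :: rat \<Rightarrow> complex) (map_poly of_int p) = map_poly of_int p"
  by (simp add: map_poly_map_poly o_def)

lemma minpoly_ex:
  fixes w :: complex and P0 :: "rat poly"
  assumes P0: "P0 \<noteq> 0" "poly (map_poly of_rat P0) w = 0"
  shows "\<exists>f::rat poly. monic f \<and> poly (map_poly of_rat f) w = 0 \<and>
           (\<forall>P. poly (map_poly of_rat P) w = 0 \<longrightarrow> f dvd P)"
proof -
  interpret rh: map_poly_idom_hom "of_rat :: rat \<Rightarrow> complex" ..
  define V where "V = {P::rat poly. P \<noteq> 0 \<and> poly (map_poly of_rat P) w = 0}"
  have ex: "\<exists>d. \<exists>P\<in>V. degree P = d" using P0 unfolding V_def by blast
  define d where "d = (LEAST d. \<exists>P\<in>V. degree P = d)"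
  obtain P1 where P1: "P1 \<in> V" "degree P1 = d" using LeastI_ex[OF ex] unfolding d_def by blast
  have mind: "d \<le> degree P" if "P \<in> V" for P
    unfolding d_def using that by (intro Least_le) blast
  define f where "f = smult (inverse (lead_coeff P1)) P1"
  have P1nz: "P1 \<noteq> 0" using P1 unfolding V_def by auto
  have mon: "monic f" unfolding f_def using P1nz by (simp add: lead_coeff_smult)
  have degf: "degree f = d" unfolding f_def using P1 P1nz leading_coeff_neq_0[OF P1nz] by simp
  have fw: "poly (map_poly of_rat f) w = 0"
    using P1 unfolding f_def V_def by (simp add: hom_distribs)
  have dvd: "f dvd P" if Pw: "poly (map_poly of_rat P) w = 0" for P
  proof (rule ccontr)
    assume nd: "\<not> f dvd P"
    define r where "r = P mod f"
    have r0: "r \<noteq> 0" using nd unfolding r_def by (simp add: mod_eq_0_iff_dvd)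
    have f0: "f \<noteq> 0" using mon by auto
    have "degree r < degree f" using degree_mod_less'[OF f0] r0 unfolding r_def by blast
    moreover have "r \<in> V"
    proof -
      obtain q where "P = f * q + r" unfolding r_def by (metis div_mult_mod_eq mult.commute)
      hence "r = P - f * q" by (simp add: algebra_simps)
      hence "poly (map_poly of_rat r) w = poly (map_poly of_rat P) w - poly (map_poly of_rat f) w * poly (map_poly (of_rat :: rat \<Rightarrow> complex) q) w"
        by (simp add: hom_distribs)
      thus ?thesis using Pw fw r0 unfolding V_def by simp
    qed
    ultimately show False using mind degf by fastforce
  qed
  show ?thesis using mon fw dvd by blast
qed

lemma L_step:
  fixes w :: complex and f :: "rat poly" and n l :: nat
  assumes n: "n > 0" and wn: "w^n = 1" and mon: "monic f" and fw: "poly (map_poly of_rat f) w = 0"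
    and fmin: "\<And>P. poly (map_poly of_rat P) w = 0 \<Longrightarrow> f dvd P"
    and l: "prime l" and ln: "\<not> l dvd n"
  shows "poly (map_poly of_rat f) (w^l) = 0"
proof (rule ccontr)
  assume nz: "poly (map_poly of_rat f) (w^l) \<noteq> 0"
  define XZ :: "int poly" where "XZ = [:-1:] + Polynomial.monom 1 n"
  have degXZ: "degree XZ = n" unfolding XZ_def using n by (subst degree_add_eq_right) (auto simp: degree_monom_eq)
  have lcXZ: "lead_coeff XZ = 1" unfolding XZ_def using n by (subst lead_coeff_add_le) (auto simp: degree_monom_eq)
  have evX: "poly (map_poly of_int XZ) x = x^n - 1" for x :: complex
    unfolding XZ_def by (simp add: hom_distribs poly_monom)
  have "poly (map_poly of_rat (map_poly of_int XZ :: rat poly)) w = 0"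
    unfolding rat_int_comp evX using wn by simp
  from fmin[OF this] obtain g0 where g0: "map_poly of_int XZ = f * g0" by (auto elim: dvdE)
  obtain r0 rf where rn: "rat_to_normalized_int_poly f = (r0, rf)" by force
  note rn' = rat_to_normalized_int_poly[OF rn]
  from rat_to_int_factor_explicit[OF g0 rn] obtain r' where fac: "XZ = rf * smult (content XZ) r'" by blast
  define gi where "gi = smult (content XZ) r'"
  have fac: "rf * gi = XZ" using fac unfolding gi_def by simp
  have "lead_coeff rf * lead_coeff gi = 1" using arg_cong[OF fac, of lead_coeff] lcXZ by (simp add: lead_coeff_mult)
  hence lrf: "lead_coeff rf = 1 \<or> lead_coeff rf = -1" using zmult_eq_1_iff by blast
  have "lead_coeff f = r0 * of_int (lead_coeff rf)" using rn'(1)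
    by (simp add: lead_coeff_smult)
  hence "r0 * of_int (lead_coeff rf) = 1" using mon by simp
  with rn'(2) lrf have lrf1: "lead_coeff rf = 1" and r01: "r0 = 1" by auto
  have fdef: "f = map_poly of_int rf" using rn'(1) r01 by simp
  have degf: "degree rf > 0"
  proof (rule ccontr)
    assume "\<not> degree rf > 0"
    hence "degree f = 0" using rn'(4) by simp
    hence "f = 1" using mon by (metis monic_degree_0)
    thus False using fw by simp
  qed
  have "poly (map_poly of_int XZ) (w^l) = 0" unfolding evX
    by (metis wn power_mult power_one mult.commute right_minus_eq)
  hence "poly (map_poly of_int rf) (w^l) * poly (map_poly of_int gi) (w^l) = (0::complex)"
    unfolding fac[symmetric] by (simp add: hom_distribs)
  moreover have "poly (map_poly of_int rf) (w^l) \<noteq> (0::complex)"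
    using nz unfolding fdef rat_int_comp .
  ultimately have gz: "poly (map_poly of_int gi) (w^l) = (0::complex)" by simp
  define Qz where "Qz = pcompose gi (Polynomial.monom 1 l)"
  have "poly (map_poly of_int Qz) w = (0::complex)"
    unfolding Qz_def using gz by (simp add: hom_distribs poly_pcompose poly_monom)
  hence "poly (map_poly of_rat (map_poly of_int Qz :: rat poly)) w = 0"
    unfolding rat_int_comp .
  from fmin[OF this] have "map_poly of_int rf dvd (map_poly of_int Qz :: rat poly)" unfolding fdef .
  from monic_int_dvd_transfer[OF lrf1 this] have "rf dvd Qz" .
  have m1: "([:-1:]::int poly) = -1" by (rule poly_eqI) (simp add: coeff_pCons split: nat.split)
  have fg: "rf * gi = Polynomial.monom 1 n - 1" using fac unfolding XZ_def m1 by simp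
  from int_contra[OF lrf1 degf fg n l ln] \<open>rf dvd Qz\<close> show False
    unfolding Qz_def by simp
qed



lemma key_rat:
  fixes w :: complex and n j :: nat and P :: "rat poly"
  assumes n: "n > 0" and wn: "w^n = 1" and g: "gcd j n = 1"
    and Pw: "poly (map_poly of_rat P) w = 0"
  shows "poly (map_poly of_rat P) (w^j) = 0"
  using g Pw
proof (induction j arbitrary: P rule: less_induct)
  case (less j)
  show ?case
  proof (cases "j \<le> 1")
    case True
    then consider "j = 0" | "j = 1" by linarith
    then show ?thesis
    proof cases
      case 1
      then have "n = 1" using less.prems by simp
      then have "w = 1" using wn by simp
      then show ?thesis using less.prems 1 by simp
    next
      case 2 then show ?thesis using less.prems by simp
    qed
  next
    case False
    then obtain l where l: "prime l" "l dvd j" using prime_factor_nat[of j] by auto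
    define m where "m = j div l"
    have jm: "j = l * m" using l unfolding m_def by simp
    have l2: "l \<ge> 2" using l prime_ge_2_nat by blast
    have m0: "m > 0" using False jm by (cases m) auto
    have "1 * m < l * m" using l2 m0 by (intro mult_strict_right_mono) auto
    hence mj: "m < j" using jm by simp
    have mdvd: "m dvd j" using jm by simp
    have gm: "gcd m n = 1"
    proof -
      have "gcd m n dvd gcd j n" using dvd_trans[OF gcd_dvd1 mdvd] gcd_dvd2 by (rule gcd_greatest)
      thus ?thesis using less.prems(1) by simp
    qed
    have ln: "\<not> l dvd n"
    proof
      assume "l dvd n"
      hence "l dvd gcd j n" using l by simp
      thus False using less.prems(1) l2 by simp
    qed
    have IH: "poly (map_poly of_rat P) (w^m) = 0" using less.IH[OF mj gm less.prems(2)] .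
    show ?thesis
    proof (cases "P = 0")
      case True then show ?thesis by simp
    next
      case Pnz: False
      interpret rh: map_poly_idom_hom "of_rat :: rat \<Rightarrow> complex" ..
      define v where "v = w^m"
      have vn: "v^n = 1" unfolding v_def using wn by (metis power_mult mult.commute power_one)
      obtain f where f: "monic f" "poly (map_poly of_rat f) v = 0"
        "\<And>P. poly (map_poly of_rat P) v = 0 \<Longrightarrow> f dvd P"
        using minpoly_ex[OF Pnz IH[folded v_def]] by blast
      have fl: "poly (map_poly of_rat f) (v^l) = 0"
        using L_step[OF n vn f(1) f(2) f(3) l(1) ln] by blast
      from f(3)[OF IH[folded v_def]] obtain q where "P = f * q" by (auto elim: dvdE)
      hence "poly (map_poly of_rat P) (v^l) = poly (map_poly of_rat f) (v^l) * poly (map_poly (of_rat :: rat \<Rightarrow> complex) q) (v^l)"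
        by (simp add: hom_distribs)
      also have "\<dots> = 0" using fl by simp
      finally show ?thesis unfolding v_def jm by (metis power_mult mult.commute)
    qed
  qed
qed

lemma zeta_pow_n: "n > 0 \<Longrightarrow> cis (2 * pi / real n) ^ n = 1"
  by (simp add: DeMoivre)

lemma key_int:
  fixes n j :: nat and P :: "int poly"
  assumes n: "n > 0" and g: "gcd j n = 1"
    and Pw: "poly (map_poly of_int P) (cis (2 * pi / real n)) = (0::complex)"
  shows "poly (map_poly of_int P) (cis (2 * pi / real n) ^ j) = (0::complex)"
  using key_rat[OF n zeta_pow_n[OF n] g, of "map_poly of_int P"] Pw unfolding rat_int_comp by simp



lemma transfer_F:
  fixes z :: "'a::field" and P :: "int poly" and n :: nat
  assumes n: "n > 0" and zn: "z^n = 1" and zmin: "\<And>d. 0 < d \<Longrightarrow> d < n \<Longrightarrow> z^d \<noteq> 1"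
    and PZ: "poly (map_poly of_int P) (cis (2*pi/real n)) = (0::complex)"
  shows "poly (map_poly of_int P) z = 0"
proof -
  define \<zeta> where "\<zeta> = cis (2*pi/real n)"
  define H :: "int poly" where "H = (\<Prod>q\<in>prime_factors n. [:-1:] + Polynomial.monom 1 (n div q))"
  define XZ :: "int poly" where "XZ = [:-1:] + Polynomial.monom 1 n"
  have evX: "poly (map_poly of_int XZ) x = x^n - 1" for x :: "'b::comm_ring_1"
    unfolding XZ_def by (simp add: hom_distribs poly_monom)
  have evH: "poly (map_poly of_int H) x = (\<Prod>q\<in>prime_factors n. x^(n div q) - 1)" for x :: "'b::comm_ring_1"
    unfolding H_def by (simp add: hom_distribs poly_monom poly_prod)
  have roots: "poly (map_poly of_int (P*H)) x = 0" if "poly (map_poly of_int XZ) x = 0" for x :: complex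
  proof -
    have "x^n = 1" using that unfolding evX by simp
    hence "x \<in> (\<lambda>k. cis (2 * pi * real k / real n)) ` {..<n}"
      using bij_betw_imp_surj_on[OF bij_betw_roots_unity[OF n]] by blast
    then obtain k where k: "k < n" "x = cis (2 * pi * real k / real n)" by blast
    have xk: "x = \<zeta>^k" unfolding k(2) \<zeta>_def DeMoivre by (simp add: field_simps)
    show ?thesis
    proof (cases "gcd k n = 1")
      case True
      have "poly (map_poly of_int P) x = (0::complex)"
        unfolding xk \<zeta>_def using key_int[OF n True PZ] .
      thus ?thesis by (simp add: hom_distribs)
    next
      case False
      then obtain q where q: "prime q" "q dvd gcd k n" using prime_factor_nat[of "gcd k n"] by blast
      hence qn: "q dvd n" and qk: "q dvd k" by auto
      have qpf: "q \<in> prime_factors n" using q qn n by (simp add: in_prime_factors_iff)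
      obtain k' where k': "k = q * k'" using qk by (auto elim: dvdE)
      obtain n' where n': "n = q * n'" using qn by (auto elim: dvdE)
      have q0: "q > 0" using q prime_gt_0_nat by blast
      have "k * (n div q) = k' * n" unfolding k' n' using q0 by simp
      hence "x^(n div q) = (\<zeta>^n)^k'" unfolding xk by (metis power_mult mult.commute)
      also have "\<zeta>^n = 1" unfolding \<zeta>_def using zeta_pow_n[OF n] .
      finally have "x^(n div q) - 1 = 0" by simp
      hence "poly (map_poly of_int H) x = (0::complex)" unfolding evH using qpf
        by (metis (no_types, lifting) finite_set_mset prod_zero_iff)
      thus ?thesis by (simp add: hom_distribs)
    qed
  qed
  have XZ0: "map_poly (of_int :: int \<Rightarrow> complex) XZ \<noteq> 0"
  proof
    assume "map_poly (of_int :: int \<Rightarrow> complex) XZ = 0"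
    hence "poly (map_poly (of_int :: int \<Rightarrow> complex) XZ) 0 = 0" by simp
    thus False unfolding evX using n by (simp add: power_0_left)
  qed
  have monX: "monic XZ" unfolding XZ_def using n by (subst lead_coeff_add_le) (auto simp: degree_monom_eq)
  define N where "N = degree (map_poly (of_int :: int \<Rightarrow> complex) XZ)"
  have "map_poly (of_int :: int \<Rightarrow> complex) XZ dvd (map_poly of_int (P*H))^N"
    using nullstellensatz_univariate[of "map_poly (of_int :: int \<Rightarrow> complex) XZ" "map_poly of_int (P*H)"] roots XZ0
    unfolding N_def by blast
  hence "map_poly (of_int :: int \<Rightarrow> complex) XZ dvd map_poly of_int ((P*H)^N)"
    by (simp add: hom_distribs)
  from monic_int_dvd_transfer[OF monX this] obtain K where K: "(P*H)^N = XZ * K" by (auto elim: dvdE)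
  have "(poly (map_poly of_int P) z * poly (map_poly of_int H) z)^N = (z^n - 1) * poly (map_poly of_int K) z"
  proof -
    have "poly (map_poly of_int ((P*H)^N)) z = poly (map_poly of_int (XZ * K)) z" unfolding K ..
    thus ?thesis unfolding evX[symmetric] by (simp add: hom_distribs)
  qed
  also have "\<dots> = 0" using zn by simp
  finally have "poly (map_poly of_int P) z * poly (map_poly of_int H) z = 0" by simp
  moreover have "poly (map_poly of_int H) z \<noteq> 0"
  proof -
    have "z^(n div q) - 1 \<noteq> 0" if "q \<in> prime_factors n" for q
    proof -
      have q: "prime q" "q dvd n" using that by (auto simp: in_prime_factors_iff)
      have q2: "q \<ge> 2" using q prime_ge_2_nat by blast
      have "n div q < n" using n q2 by simp
      moreover have "n div q > 0" using q n q2 by (simp add: div_greater_zero_iff dvd_imp_le)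
      ultimately show ?thesis using zmin by simp
    qed
    thus ?thesis unfolding evH by simp
  qed
  ultimately show ?thesis by simp
qed



lemma powi_mod:
  fixes x :: "'a::field"
  assumes x0: "x \<noteq> 0" and xn: "x^n = 1" and n: "n > 0"
  shows "x powi e = x ^ nat (e mod int n)"
proof -
  have e: "e = int n * (e div int n) + e mod int n" by simp
  have "x powi e = x powi (int n * (e div int n)) * x powi (e mod int n)"
    using x0 by (subst e, subst power_int_add) auto
  also have "x powi (int n * (e div int n)) = (x powi int n) powi (e div int n)"
    by (rule power_int_mult)
  also have "x powi int n = 1" using xn by simp
  also have "x powi (e mod int n) = x ^ nat (e mod int n)"
  proof -
    have "e mod int n = int (nat (e mod int n))" using n by simp
    hence "x powi (e mod int n) = x powi int (nat (e mod int n))" by simp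
    also have "\<dots> = x ^ nat (e mod int n)" by (rule power_int_of_nat)
    finally show ?thesis .
  qed
  finally show ?thesis by simp
qed

lemma order_exists:
  fixes z :: "'a::{field,finite}"
  assumes z0: "z \<noteq> 0"
  shows "\<exists>d>0. z^d = 1"
proof -
  have "\<not> inj (\<lambda>m::nat. z^m)"
  proof
    assume "inj (\<lambda>m::nat. z^m)"
    hence "finite (UNIV :: nat set)" using finite_imageD[of "\<lambda>m::nat. z^m" UNIV] by simp
    thus False by simp
  qed
  then obtain a b :: nat where ab: "a \<noteq> b" "z^a = z^b" unfolding inj_def by blast
  have gen: "\<exists>d>0. z^d = 1" if "a < b" "z^a = z^b" for a b :: nat
  proof -
    have "z^a * z^(b-a) = z^b" using \<open>a < b\<close> by (metis le_add_diff_inverse less_imp_le power_add)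
    hence "z^a * z^(b-a) = z^a * 1" using that by simp
    hence "z^(b-a) = 1" using z0 by simp
    thus ?thesis using that by (intro exI[of _ "b-a"]) simp
  qed
  show ?thesis
  proof (cases "a < b")
    case True then show ?thesis using gen ab by blast
  next
    case False then have "b < a" using ab by simp
    then show ?thesis using gen ab by metis
  qed
qed

lemma order_card:
  fixes z :: "'a::{field,finite}"
  assumes z0: "z \<noteq> 0"
  shows "card {z^m | m. True} > 0 \<and> z ^ card {z^m | m. True} = 1 \<and>
         (\<forall>d. 0 < d \<and> d < card {z^m | m. True} \<longrightarrow> z^d \<noteq> 1)"
proof -
  define ord0 where "ord0 = (LEAST d. d > 0 \<and> z^d = 1)"
  have ord0: "ord0 > 0" "z^ord0 = 1" using LeastI_ex[OF order_exists[OF z0]] unfolding ord0_def by auto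
  have omin: "z^d \<noteq> 1" if "0 < d" "d < ord0" for d
    using not_less_Least[of d "\<lambda>d. d > 0 \<and> z^d = 1"] that unfolding ord0_def by auto
  have zm: "z^m = z^(m mod ord0)" for m
  proof -
    have "z^m = z^(ord0 * (m div ord0) + m mod ord0)" by simp
    also have "\<dots> = (z^ord0)^(m div ord0) * z^(m mod ord0)" by (simp only: power_add power_mult)
    finally show ?thesis using ord0 by simp
  qed
  have eq: "{z^m | m. True} = (\<lambda>m. z^m) ` {..<ord0}"
  proof
    show "{z^m | m. True} \<subseteq> (\<lambda>m. z^m) ` {..<ord0}"
    proof
      fix y assume "y \<in> {z^m | m. True}"
      then obtain m where "y = z^m" by blast
      hence "y = z^(m mod ord0)" using zm by simp
      moreover have "m mod ord0 < ord0" using ord0 by simp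
      ultimately show "y \<in> (\<lambda>m. z^m) ` {..<ord0}" by blast
    qed
  qed blast
  have inj: "inj_on (\<lambda>m. z^m) {..<ord0}"
  proof (rule inj_onI)
    fix a b assume ab: "a \<in> {..<ord0}" "b \<in> {..<ord0}" "z^a = z^b"
    show "a = b"
    proof (rule ccontr)
      assume "a \<noteq> b"
      have g: False if "a' < b'" "b' < ord0" "z^a' = z^b'" for a' b' :: nat
      proof -
        have "z^a' * z^(b'-a') = z^b'" using \<open>a' < b'\<close> by (metis le_add_diff_inverse less_imp_le power_add)
        hence "z^a' * z^(b'-a') = z^a' * 1" using that by simp
        hence "z^(b'-a') = 1" using z0 by simp
        thus False using omin[of "b'-a'"] that by simp
      qed
      show False
      proof (cases "a < b")
        case True then show False using g[of a b] ab by simp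
      next
        case False then have "b < a" using \<open>a \<noteq> b\<close> by simp
        then show False using g[of b a] ab by simp
      qed
    qed
  qed
  have "card {z^m | m. True} = ord0" unfolding eq using card_image[OF inj] by simp
  thus ?thesis using ord0 omin by simp
qed

lemma ev_hom:
  fixes x :: "'b::comm_ring_1"
  shows "comm_ring_hom (\<lambda>p::int poly. poly (map_poly of_int p) x)"
  by unfold_locales (simp_all add: hom_distribs)

theorem mainTheorem1:
  fixes G' :: "'a::{field,finite} mat"
    and N k n :: nat
    and z' :: 'a
    and e :: "nat \<Rightarrow> nat \<Rightarrow> int"
    and G :: "complex mat"
  assumes MDS': "generates_MDS N k G'"
    and gen: "gen_mult_subgroup {G' $$ (i, j) | i j. i < k \<and> j < N \<and> G' $$ (i, j) \<noteq> 0}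
                = {z' ^ m | m. True}"
    and n_def: "n = card (gen_mult_subgroup {G' $$ (i, j) | i j. i < k \<and> j < N \<and> G' $$ (i, j) \<noteq> 0})"
    and e_def: "\<And>i j. i < k \<Longrightarrow> j < N \<Longrightarrow> G' $$ (i, j) \<noteq> 0 \<Longrightarrow> G' $$ (i, j) = z' powi e i j"
    and G_dim: "G \<in> carrier_mat k N"
    and G_zero: "\<And>i j. i < k \<Longrightarrow> j < N \<Longrightarrow> G' $$ (i, j) = 0 \<Longrightarrow> G $$ (i, j) = 0"
    and G_nz: "\<And>i j. i < k \<Longrightarrow> j < N \<Longrightarrow> G' $$ (i, j) \<noteq> 0 \<Longrightarrow>
                 G $$ (i, j) = cis (2 * pi / real n) powi e i j"
  shows "generates_MDS N k G"
proof -
  define S where "S = {G' $$ (i, j) | i j. i < k \<and> j < N \<and> G' $$ (i, j) \<noteq> 0}"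
  have sub: "mult_subgroup (UNIV - {0::'a})" unfolding mult_subgroup_def by auto
  have "gen_mult_subgroup S \<subseteq> UNIV - {0}"
    unfolding gen_mult_subgroup_def using sub by (intro Inter_lower) (auto simp: S_def)
  moreover have "z' \<in> gen_mult_subgroup S" unfolding S_def gen by (auto intro: exI[of _ 1])
  ultimately have z0: "z' \<noteq> 0" by blast
  have nn: "n = card {z' ^ m | m. True}" unfolding n_def gen ..
  from order_card[OF z0, folded nn] have n0: "n > 0" and zn: "z'^n = 1"
    and zmin: "\<And>d. 0 < d \<Longrightarrow> d < n \<Longrightarrow> z'^d \<noteq> 1" by auto
  define \<zeta> where "\<zeta> = cis (2 * pi / real n)"
  have \<zeta>n: "\<zeta>^n = 1" unfolding \<zeta>_def using zeta_pow_n[OF n0] .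
  have \<zeta>0: "\<zeta> \<noteq> 0" unfolding \<zeta>_def by simp
  define E where "E i j = nat (e i j mod int n)" for i j
  from MDS' have G'dim: "G' \<in> carrier_mat k N" and kN: "k \<le> N"
    and dets: "\<And>c. strict_mono_on {0..<k} c \<Longrightarrow> (\<forall>j<k. c j < N) \<Longrightarrow> det (col_submat G' k c) \<noteq> 0"
    unfolding generates_MDS_def by auto
  have "det (col_submat G k c) \<noteq> 0" if c: "strict_mono_on {0..<k} c" "\<forall>j<k. c j < N" for c
  proof -
    define A :: "int poly mat" where
      "A = mat k k (\<lambda>(i, j). if G' $$ (i, c j) = 0 then 0 else Polynomial.monom 1 (E i (c j)))"
    define evC where "evC = (\<lambda>p::int poly. poly (map_poly of_int p) \<zeta>)"
    define evF where "evF = (\<lambda>p::int poly. poly (map_poly of_int p) z')"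
    interpret hC: comm_ring_hom evC unfolding evC_def by (rule ev_hom)
    interpret hF: comm_ring_hom evF unfolding evF_def by (rule ev_hom)
    have mC: "col_submat G k c = map_mat evC A"
    proof (rule eq_matI)
      fix i j assume ij: "i < dim_row (map_mat evC A)" "j < dim_col (map_mat evC A)"
      hence i: "i < k" and j: "j < k" unfolding A_def by auto
      have cj: "c j < N" using c j by auto
      show "col_submat G k c $$ (i, j) = map_mat evC A $$ (i, j)"
      proof (cases "G' $$ (i, c j) = 0")
        case True
        then show ?thesis using G_zero[OF i cj] i j unfolding col_submat_def A_def evC_def by simp
      next
        case False
        have "G $$ (i, c j) = \<zeta> ^ E i (c j)"
          using G_nz[OF i cj False] powi_mod[OF \<zeta>0 \<zeta>n n0] unfolding \<zeta>_def E_def by simp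
        then show ?thesis using False i j unfolding col_submat_def A_def evC_def
          by (simp add: poly_monom)
      qed
    qed (auto simp: col_submat_def A_def)
    have mF: "col_submat G' k c = map_mat evF A"
    proof (rule eq_matI)
      fix i j assume ij: "i < dim_row (map_mat evF A)" "j < dim_col (map_mat evF A)"
      hence i: "i < k" and j: "j < k" unfolding A_def by auto
      have cj: "c j < N" using c j by auto
      show "col_submat G' k c $$ (i, j) = map_mat evF A $$ (i, j)"
      proof (cases "G' $$ (i, c j) = 0")
        case True
        then show ?thesis using i j unfolding col_submat_def A_def evF_def by simp
      next
        case False
        have "G' $$ (i, c j) = z' ^ E i (c j)"
          using e_def[OF i cj False] powi_mod[OF z0 zn n0] unfolding E_def by simp
        then show ?thesis using False i j unfolding col_submat_def A_def evF_def
          by (simp add: poly_monom)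
      qed
    qed (auto simp: col_submat_def A_def)
    have "evF (det A) \<noteq> 0" using dets[OF c] unfolding mF hF.hom_det .
    hence "evC (det A) \<noteq> 0"
      using transfer_F[OF n0 zn zmin, of "det A"] unfolding evC_def evF_def \<zeta>_def by blast
    thus ?thesis unfolding mC hC.hom_det .
  qed
  thus ?thesis unfolding generates_MDS_def using G_dim kN by blast
qed

end
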